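(* Let $D$ be an acyclic digraph, let $G$ be an induced subgraph of $P(D)$, and let $H$ be a subgraph of $G$ such that (i) every maximal clique of $H$ is also a maximal clique of $G$; (ii) any maximal clique of $G$ belonging to $H$ and any maximal clique of $G$ not belonging to $H$ share at most one vertex. Let $$X=\{x \in V(H) \cup (V(D)\setminus V(G)) : N_D^-[x] \cap V(H) \text{ is a clique of size at least two in } H\},$$ and let $D^*$ be the digraph with vertex set $V(D^* ) = V(H) \cup (V(D)\setminus V(G))$ and arc set $$A(D^* )=\bigcup_{x \in X} \left[N_D^-[x] \cap V(H),\{x\}\right]_D .$$ Then $P(D^* )$ contains $H$ as an induced subgraph.
   Context: All graphs are finite and simple. For an acyclic digraph $D$, the phylogeny graph $P(D)$ is the graph on $V(D)$ in which distinct vertices $u,v$ are adjacent if and only if $(u,v)\in A(D)$, or $(v,u)\in A(D)$, or there is a vertex $w$ with $(u,w),(v,w)\in A(D)$. For a vertex $x$ of a digraph $D$, $N_D^-[x]$ denotes the closed in-neighborhood $\{x\}\cup\{u : (u,x)\in A(D)\}$. For vertex sets $U,V$ of $D$, $[U,V]_D$ denotes the set of arcs of $D$ with tail in $U$ and head in $V$. A clique of $G$ "belongs to $H$" if it is a clique of $H$ (all its vertices are in $V(H)$ and all edges among them are in $E(H)$). *)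

theory Defs
  imports Main
begin

definition digraph :: "'a set \<Rightarrow> ('a \<times> 'a) set \<Rightarrow> bool" where
  "digraph V A \<longleftrightarrow> finite V \<and> A \<subseteq> V \<times> V"

definition acyclic_digraph :: "'a set \<Rightarrow> ('a \<times> 'a) set \<Rightarrow> bool" where
  "acyclic_digraph V A \<longleftrightarrow> digraph V A \<and> acyclic A"

definition graph :: "'a set \<Rightarrow> 'a set set \<Rightarrow> bool" where
  "graph V E \<longleftrightarrow> finite V \<and> (\<forall>e\<in>E. e \<subseteq> V \<and> card e = 2)"

text \<open>Edge set of the phylogeny graph P(D) (its vertex set is V(D)).\<close>
definition phylo_edges :: "'a set \<Rightarrow> ('a \<times> 'a) set \<Rightarrow> 'a set set" where
  "phylo_edges V A = {{u, v} | u v. u \<in> V \<and> v \<in> V \<and> u \<noteq> v \<and>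
     ((u, v) \<in> A \<or> (v, u) \<in> A \<or> (\<exists>w. (u, w) \<in> A \<and> (v, w) \<in> A))}"

definition induced_subgraph :: "'a set \<Rightarrow> 'a set set \<Rightarrow> 'a set \<Rightarrow> 'a set set \<Rightarrow> bool" where
  "induced_subgraph VH EH VG EG \<longleftrightarrow> VH \<subseteq> VG \<and> EH = {e \<in> EG. e \<subseteq> VH}"

definition subgraph :: "'a set \<Rightarrow> 'a set set \<Rightarrow> 'a set \<Rightarrow> 'a set set \<Rightarrow> bool" where
  "subgraph VH EH VG EG \<longleftrightarrow> graph VH EH \<and> VH \<subseteq> VG \<and> EH \<subseteq> EG"

definition clique :: "'a set \<Rightarrow> 'a set set \<Rightarrow> 'a set \<Rightarrow> bool" where
  "clique V E K \<longleftrightarrow> K \<noteq> {} \<and> K \<subseteq> V \<and> (\<forall>u\<in>K. \<forall>v\<in>K. u \<noteq> v \<longrightarrow> {u, v} \<in> E)"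

definition maximal_clique :: "'a set \<Rightarrow> 'a set set \<Rightarrow> 'a set \<Rightarrow> bool" where
  "maximal_clique V E K \<longleftrightarrow> clique V E K \<and> (\<forall>K'. clique V E K' \<and> K \<subseteq> K' \<longrightarrow> K' = K)"

definition closed_in_nbhd :: "('a \<times> 'a) set \<Rightarrow> 'a \<Rightarrow> 'a set" where
  "closed_in_nbhd A x = insert x {u. (u, x) \<in> A}"

definition arcs_between :: "('a \<times> 'a) set \<Rightarrow> 'a set \<Rightarrow> 'a set \<Rightarrow> ('a \<times> 'a) set" where
  "arcs_between A U W = {(u, w) \<in> A. u \<in> U \<and> w \<in> W}"

definition Xset :: "'a set \<Rightarrow> ('a \<times> 'a) set \<Rightarrow> 'a set \<Rightarrow> 'a set \<Rightarrow> 'a set set \<Rightarrow> 'a set" where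
  "Xset VD AD VG VH EH = {x \<in> VH \<union> (VD - VG).
      clique VH EH (closed_in_nbhd AD x \<inter> VH) \<and> card (closed_in_nbhd AD x \<inter> VH) \<ge> 2}"

end

theory Submission
  imports Defs
begin

lemma clique_sub: "clique V E K \<Longrightarrow> K' \<subseteq> K \<Longrightarrow> K' \<noteq> {} \<Longrightarrow> clique V E K'"
  unfolding clique_def by blast

lemma ext_max:
  assumes "finite V" "clique V E K"
  shows "\<exists>K'. maximal_clique V E K' \<and> K \<subseteq> K'"
proof -
  let ?P = "\<lambda>K'. clique V E K' \<and> K \<subseteq> K'"
  have b: "\<forall>y. ?P y \<longrightarrow> card y < Suc (card V)"
    using assms(1) by (metis clique_def card_mono le_imp_less_Suc)
  obtain M where M: "?P M" "\<forall>y. ?P y \<longrightarrow> card y \<le> card M"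
    using ex_has_greatest_nat[of ?P K card "Suc (card V)"] assms(2) b by blast
  have "maximal_clique V E M"
    unfolding maximal_clique_def
  proof (intro conjI allI impI)
    show "clique V E M" using M by blast
    fix K' assume h: "clique V E K' \<and> M \<subseteq> K'"
    then have "?P K'" using M by blast
    then have "card K' \<le> card M" using M by blast
    moreover have "finite K'" using h assms(1) by (auto simp: clique_def intro: finite_subset)
    ultimately show "K' = M" using h card_seteq by blast
  qed
  then show ?thesis using M by blast
qed

lemma phylo_nbhd:
  assumes "{u,v} \<in> phylo_edges V A" "A \<subseteq> V \<times> V"
  shows "\<exists>x\<in>V. u \<in> closed_in_nbhd A x \<and> v \<in> closed_in_nbhd A x"
proof -
  obtain a b where ab: "{u,v} = {a,b}" "a \<in> V" "b \<in> V"
    "(a, b) \<in> A \<or> (b, a) \<in> A \<or> (\<exists>w. (a, w) \<in> A \<and> (b, w) \<in> A)"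
    using assms(1) unfolding phylo_edges_def by blast
  have "\<exists>x\<in>V. a \<in> closed_in_nbhd A x \<and> b \<in> closed_in_nbhd A x"
    using ab(2-4) assms(2) unfolding closed_in_nbhd_def by blast
  then show ?thesis using ab(1) by (auto simp: doubleton_eq_iff)
qed

lemma phylo_intro:
  assumes "u \<in> V" "v \<in> V" "u \<noteq> v"
    "(u, v) \<in> A \<or> (v, u) \<in> A \<or> (\<exists>w. (u, w) \<in> A \<and> (v, w) \<in> A)"
  shows "{u,v} \<in> phylo_edges V A"
  unfolding phylo_edges_def using assms by blast

theorem mainTheorem1:
  fixes VD :: "'a set" and AD :: "('a \<times> 'a) set"
    and VG VH :: "'a set" and EG EH :: "'a set set"
  assumes D: "acyclic_digraph VD AD"
    and G: "induced_subgraph VG EG VD (phylo_edges VD AD)"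
    and H: "subgraph VH EH VG EG"
    and i: "\<And>K. maximal_clique VH EH K \<Longrightarrow> maximal_clique VG EG K"
    and ii: "\<And>K1 K2. maximal_clique VG EG K1 \<Longrightarrow> clique VH EH K1 \<Longrightarrow>
               maximal_clique VG EG K2 \<Longrightarrow> \<not> clique VH EH K2 \<Longrightarrow> card (K1 \<inter> K2) \<le> 1"
  defines "VDs \<equiv> VH \<union> (VD - VG)"
    and "ADs \<equiv> (\<Union>x\<in>Xset VD AD VG VH EH. arcs_between AD (closed_in_nbhd AD x \<inter> VH) {x})"
  shows "induced_subgraph VH EH VDs (phylo_edges VDs ADs)"
proof -
  have finD: "finite VD" and AD: "AD \<subseteq> VD \<times> VD"
    using D by (auto simp: acyclic_digraph_def digraph_def)
  have VG: "VG \<subseteq> VD" and EG: "EG = {e \<in> phylo_edges VD AD. e \<subseteq> VG}"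
    using G by (auto simp: induced_subgraph_def)
  have gH: "graph VH EH" and VH: "VH \<subseteq> VG" and EH: "EH \<subseteq> EG"
    using H by (auto simp: subgraph_def)
  have finG: "finite VG" using finD VG finite_subset by blast
  have finH: "finite VH" using gH by (simp add: graph_def)
  have memADs: "\<And>p q. (p,q) \<in> ADs \<longleftrightarrow> q \<in> Xset VD AD VG VH EH \<and> (p,q) \<in> AD \<and>
      p \<in> closed_in_nbhd AD q \<inter> VH"
    unfolding ADs_def arcs_between_def by blast
  have part1: "e \<in> phylo_edges VDs ADs" if eH: "e \<in> EH" for e
  proof -
    have "e \<subseteq> VH" "card e = 2" using gH eH by (auto simp: graph_def)
    then obtain u v where e: "e = {u,v}" "u \<noteq> v" and uv: "u \<in> VH" "v \<in> VH"
      by (auto simp: card_2_iff)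
    have "e \<in> EG" using eH EH by blast
    then have "{u,v} \<in> phylo_edges VD AD" using EG e by simp
    then obtain x where x: "x \<in> VD" "u \<in> closed_in_nbhd AD x" "v \<in> closed_in_nbhd AD x"
      using phylo_nbhd[OF _ AD] by blast
    define C where "C = closed_in_nbhd AD x \<inter> VG"
    have uvC: "u \<in> C" "v \<in> C" using x uv VH C_def by auto
    have cC: "clique VG EG C"
      unfolding clique_def
    proof (intro conjI ballI impI)
      show "C \<noteq> {}" using uvC by blast
      show "C \<subseteq> VG" using C_def by blast
      fix a b assume ab: "a \<in> C" "b \<in> C" "a \<noteq> b"
      have abV: "a \<in> VD" "b \<in> VD" using ab C_def VG by auto
      have "(a, b) \<in> AD \<or> (b, a) \<in> AD \<or> (\<exists>w. (a, w) \<in> AD \<and> (b, w) \<in> AD)"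
        using ab unfolding C_def closed_in_nbhd_def by blast
      then have "{a,b} \<in> phylo_edges VD AD"
        by (rule phylo_intro[OF abV ab(3)])
      moreover have "{a,b} \<subseteq> VG" using ab unfolding C_def by blast
      ultimately show "{a,b} \<in> EG" unfolding EG by blast
    qed
    have vu: "{v,u} = {u,v}" by blast
    have cuv: "clique VH EH {u,v}"
      unfolding clique_def using eH e uv vu by auto
    obtain K1 where K1: "maximal_clique VH EH K1" "{u,v} \<subseteq> K1"
      using ext_max[OF finH cuv] by blast
    have K1G: "maximal_clique VG EG K1" using i K1 by blast
    have K1H: "clique VH EH K1" using K1 by (simp add: maximal_clique_def)
    obtain K2 where K2: "maximal_clique VG EG K2" "C \<subseteq> K2"
      using ext_max[OF finG cC] by blast
    have K2H: "clique VH EH K2"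
    proof (rule ccontr)
      assume "\<not> clique VH EH K2"
      then have le: "card (K1 \<inter> K2) \<le> 1" using ii K1G K1H K2 by blast
      have "finite (K1 \<inter> K2)" using K1H finH by (auto simp: clique_def intro: finite_subset)
      moreover have "{u,v} \<subseteq> K1 \<inter> K2" using K1 K2 uvC by blast
      ultimately have "card {u,v} \<le> card (K1 \<inter> K2)" by (rule card_mono)
      then show False using le e(2) by simp
    qed
    have CH: "C \<subseteq> VH" using K2H K2 by (auto simp: clique_def)
    have CeqH: "closed_in_nbhd AD x \<inter> VH = C" using CH VH C_def by blast
    have cCH: "clique VH EH C" using clique_sub[OF K2H K2(2)] uvC by blast
    have "finite C" using CH finH finite_subset by blast
    then have "card {u,v} \<le> card C" using uvC card_mono by (metis empty_subsetI insert_subset)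
    then have cardC: "card C \<ge> 2" using e(2) by simp
    have xVDs: "x \<in> VH \<union> (VD - VG)"
    proof (cases "x \<in> VG")
      case True
      then have "x \<in> C" using C_def by (simp add: closed_in_nbhd_def)
      then show ?thesis using CH by blast
    qed (use x in blast)
    have xX: "x \<in> Xset VD AD VG VH EH"
      unfolding Xset_def using xVDs cCH cardC CeqH by simp
    have arc: "(a, x) \<in> ADs" if "a \<in> {u,v}" "a \<noteq> x" for a
    proof -
      have "(a,x) \<in> AD" using that x by (auto simp: closed_in_nbhd_def)
      moreover have "a \<in> closed_in_nbhd AD x \<inter> VH" using that x uv by auto
      ultimately show ?thesis using memADs xX by blast
    qed
    have uvs: "u \<in> VDs" "v \<in> VDs" using uv VDs_def by auto
    have "(u, v) \<in> ADs \<or> (v, u) \<in> ADs \<or> (\<exists>w. (u, w) \<in> ADs \<and> (v, w) \<in> ADs)"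
    proof (cases "u = x")
      case True then show ?thesis using arc[of v] e(2) by auto
    next
      case False
      show ?thesis
      proof (cases "v = x")
        case True then show ?thesis using arc[of u] e(2) by auto
      next
        case False2: False
        then show ?thesis using arc[of u] arc[of v] False by auto
      qed
    qed
    then show ?thesis unfolding e using phylo_intro[OF uvs e(2)] by blast
  qed
  have part2: "e \<in> EH" if ep: "e \<in> phylo_edges VDs ADs" and eV: "e \<subseteq> VH" for e
  proof -
    obtain a b where ab: "e = {a,b}" "a \<noteq> b"
      "(a, b) \<in> ADs \<or> (b, a) \<in> ADs \<or> (\<exists>w. (a, w) \<in> ADs \<and> (b, w) \<in> ADs)"
      using ep unfolding phylo_edges_def by blast
    have abH: "a \<in> VH" "b \<in> VH" using eV ab by auto
    have "\<exists>x \<in> Xset VD AD VG VH EH. a \<in> closed_in_nbhd AD x \<inter> VH \<and> b \<in> closed_in_nbhd AD x \<inter> VH"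
      using ab(3)
    proof (elim disjE exE conjE)
      assume "(a,b) \<in> ADs"
      then show ?thesis using memADs[of a b] abH by (auto simp: closed_in_nbhd_def)
    next
      assume "(b,a) \<in> ADs"
      then show ?thesis using memADs[of b a] abH by (auto simp: closed_in_nbhd_def)
    next
      fix w assume "(a,w) \<in> ADs" "(b,w) \<in> ADs"
      then show ?thesis using memADs[of a w] memADs[of b w] by blast
    qed
    then obtain x where "x \<in> Xset VD AD VG VH EH" "a \<in> closed_in_nbhd AD x \<inter> VH"
        "b \<in> closed_in_nbhd AD x \<inter> VH" by blast
    then show ?thesis using ab(1,2) unfolding Xset_def clique_def by blast
  qed
  show ?thesis
    unfolding induced_subgraph_def
  proof
    show "VH \<subseteq> VDs" using VDs_def by blast
    show "EH = {e \<in> phylo_edges VDs ADs. e \<subseteq> VH}"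
      using part1 part2 gH by (auto simp: graph_def)
  qed
qed

end
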